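(* Let $\Omega\subseteq\mathbb{R}^d$ be compact, $m\ge0$, and let $h_0,C_1,C_2>0$ be local polynomial reproduction constants as in the context. Let $\varphi:\mathbb{R}_{\ge0}\to\mathbb{R}_{>0}$ be decreasing with $\lim_{n\to\infty}\varphi(n+1)/\varphi(n)$ existing and $<1$. Let $X=\{x_1,\dots,x_N\}\subseteq\Omega$ be $\pi_m(\mathbb{R}^d)$-unisolvent and quasi-uniform w.r.t. $c_{qu}>0$, with $h_{X,\Omega}\le h_0$. For $x\in\Omega$ let $a^*(x)$ be any minimizer of $\sum_{i=1}^N|a_i|/\varphi(\|x-x_i\|_2/q_X)$ subject to $\sum_ip(x_i)a_i=p(x)$ for all $p\in\pi_m(\mathbb{R}^d)$. Then for all $x\in\Omega$ and all $i$, $$|a_i^*(x)|\le\frac{C_1}{\varphi(C_2c_{qu})}\,\varphi\!\left(\frac{\|x-x_i\|_2}{q_X}\right),$$ so the $a_i^*$ provide fast-decaying polynomial reproduction of degree $m$ with respect to $\varphi$ with constant $C=C_1/\varphi(C_2c_{qu})$.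
   Context: Constants $h_0,C_1,C_2>0$: for every finite $X=\{x_1,\dots,x_N\}\subseteq\Omega$ with $h_{X,\Omega}\le h_0$ and every $x\in\Omega$ there are reals $\tilde u_j(x)$ with $\sum_j p(x_j)\tilde u_j(x)=p(x)$ for all $p\in\pi_m(\mathbb{R}^d)$, $\sum_j|\tilde u_j(x)|\le C_1$, $\tilde u_j(x)=0$ if $\|x-x_j\|_2>C_2h_{X,\Omega}$. $q_X=\frac12\min_{i\ne j}\|x_i-x_j\|_2$, $h_{X,\Omega}=\sup_{x\in\Omega}\min_j\|x-x_j\|_2$; quasi-uniform w.r.t. $c_{qu}$ means $q_X\le h_{X,\Omega}\le c_{qu}q_X$. $\pi_m(\mathbb{R}^d)$: polynomials of total degree $\le m$; unisolvent: only the zero polynomial of $\pi_m$ vanishes on $X$. Fast-decaying polynomial reproduction of degree $m$ w.r.t. $\varphi$ with constant $C$: $\sum_jp(x_j)a_j^*=p$ for all $p\in\pi_m(\mathbb{R}^d)$ and $|a_j^*(x)|\le C\varphi(\|x-x_j\|_2/q_X)$ for all $x,j$. *)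

theory Defs
  imports "HOL-Analysis.Analysis"
begin

text \<open>Points of R^d are vectors of type real^'d (d = CARD('d)).
  Multi-indices are functions 'd \<Rightarrow> nat; the monomial x^alpha.\<close>

definition monomial :: "('d::finite \<Rightarrow> nat) \<Rightarrow> real^'d \<Rightarrow> real" where
  "monomial \<alpha> x = (\<Prod>i\<in>UNIV. (x $ i) ^ (\<alpha> i))"

definition polys :: "nat \<Rightarrow> (real^'d::finite \<Rightarrow> real) set" where
  "polys m = {p. \<exists>c :: ('d \<Rightarrow> nat) \<Rightarrow> real.
       p = (\<lambda>x. \<Sum>\<alpha>\<in>{\<alpha>. sum \<alpha> UNIV \<le> m}. c \<alpha> * monomial \<alpha> x)}"

definition unisolvent :: "nat \<Rightarrow> (real^'d::finite) set \<Rightarrow> bool" where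
  "unisolvent m X \<longleftrightarrow> (\<forall>p\<in>polys m. (\<forall>x\<in>X. p x = 0) \<longrightarrow> p = (\<lambda>_. 0))"

definition sep_dist :: "(real^'d::finite) set \<Rightarrow> real" where
  "sep_dist X = Min {dist x y | x y. x \<in> X \<and> y \<in> X \<and> x \<noteq> y} / 2"

definition fill_dist :: "(real^'d::finite) set \<Rightarrow> (real^'d) set \<Rightarrow> real" where
  "fill_dist X \<Omega> = (SUP x\<in>\<Omega>. Min ((\<lambda>y. dist x y) ` X))"

definition quasi_uniform :: "real \<Rightarrow> (real^'d::finite) set \<Rightarrow> (real^'d) set \<Rightarrow> bool" where
  "quasi_uniform c X \<Omega> \<longleftrightarrow> sep_dist X \<le> fill_dist X \<Omega> \<and> fill_dist X \<Omega> \<le> c * sep_dist X"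

definition reproduces :: "nat \<Rightarrow> (real^'d::finite) set \<Rightarrow> (real^'d \<Rightarrow> real) \<Rightarrow> real^'d \<Rightarrow> bool" where
  "reproduces m X u x \<longleftrightarrow> (\<forall>p\<in>polys m. (\<Sum>xj\<in>X. p xj * u xj) = p x)"

definition local_poly_repr ::
  "nat \<Rightarrow> (real^'d::finite) set \<Rightarrow> real \<Rightarrow> real \<Rightarrow> real \<Rightarrow> bool" where
  "local_poly_repr m \<Omega> h0 C1 C2 \<longleftrightarrow>
     (\<forall>X. finite X \<and> X \<subseteq> \<Omega> \<and> fill_dist X \<Omega> \<le> h0 \<longrightarrow>
        (\<forall>x\<in>\<Omega>. \<exists>u :: real^'d \<Rightarrow> real. reproduces m X u x \<and>
            (\<Sum>xj\<in>X. \<bar>u xj\<bar>) \<le> C1 \<and>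
            (\<forall>xj\<in>X. dist x xj > C2 * fill_dist X \<Omega> \<longrightarrow> u xj = 0)))"

text \<open>Fast-decaying polynomial reproduction of degree m w.r.t. phi with constant C;
  a x xj is the coefficient a_j(x).\<close>
definition fast_decaying_repr ::
  "nat \<Rightarrow> (real \<Rightarrow> real) \<Rightarrow> real \<Rightarrow> (real^'d::finite) set \<Rightarrow> (real^'d) set
     \<Rightarrow> (real^'d \<Rightarrow> real^'d \<Rightarrow> real) \<Rightarrow> bool" where
  "fast_decaying_repr m \<phi> C X \<Omega> a \<longleftrightarrow>
     (\<forall>x\<in>\<Omega>. reproduces m X (a x) x) \<and>
     (\<forall>x\<in>\<Omega>. \<forall>xj\<in>X. \<bar>a x xj\<bar> \<le> C * \<phi> (dist x xj / sep_dist X))"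

definition wobj :: "(real \<Rightarrow> real) \<Rightarrow> (real^'d::finite) set \<Rightarrow> real^'d \<Rightarrow> (real^'d \<Rightarrow> real) \<Rightarrow> real" where
  "wobj \<phi> X x a = (\<Sum>xi\<in>X. \<bar>a xi\<bar> / \<phi> (dist x xi / sep_dist X))"

end

theory Submission
  imports Defs
begin

lemma sep_pos:
  fixes X :: "(real^'d::finite) set"
  assumes "finite X" "card X \<ge> 2"
  shows "sep_dist X > 0"
proof -
  let ?S = "{dist x y | x y. x \<in> X \<and> y \<in> X \<and> x \<noteq> y}"
  have fin: "finite ?S"
  proof -
    have "?S \<subseteq> (\<lambda>(x,y). dist x y) ` (X \<times> X)" by auto
    thus ?thesis using assms(1) finite_subset by blast
  qed
  obtain a b where ab: "a \<in> X" "b \<in> X" "a \<noteq> b"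
  proof -
    have "Suc (Suc 0) \<le> card X" using assms(2) by simp
    then obtain a B where aB: "X = insert a B" "a \<notin> B" "Suc 0 \<le> card B"
      unfolding card_le_Suc_iff by blast
    then obtain b C where "B = insert b C" unfolding card_le_Suc_iff by blast
    hence "a \<in> X" "b \<in> X" "a \<noteq> b" using aB by auto
    thus ?thesis using that by blast
  qed
  have ne: "?S \<noteq> {}" using ab by blast
  have "\<forall>s\<in>?S. s > 0" by auto
  hence "Min ?S > 0" using Min_gr_iff[OF fin ne] by blast
  thus ?thesis unfolding sep_dist_def by simp
qed

theorem mainTheorem7:
  fixes \<Omega> X :: "(real^'d::finite) set"
    and m :: nat and h0 C1 C2 cqu :: real
    and \<phi> :: "real \<Rightarrow> real"
    and astar :: "real^'d \<Rightarrow> real^'d \<Rightarrow> real"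
  assumes "compact \<Omega>"
    and "h0 > 0" "C1 > 0" "C2 > 0"
    and "local_poly_repr m \<Omega> h0 C1 C2"
    and "\<forall>t\<ge>0. \<phi> t > 0"
    and "\<forall>s t. 0 \<le> s \<and> s \<le> t \<longrightarrow> \<phi> t \<le> \<phi> s"
    and "\<exists>L. (\<lambda>n::nat. \<phi> (real n + 1) / \<phi> (real n)) \<longlonglongrightarrow> L \<and> L < 1"
    and "finite X" "card X \<ge> 2" "X \<subseteq> \<Omega>"
    and "unisolvent m X"
    and "cqu > 0" "quasi_uniform cqu X \<Omega>"
    and "fill_dist X \<Omega> \<le> h0"
    and "\<forall>x\<in>\<Omega>. reproduces m X (astar x) x \<and>
           (\<forall>a. reproduces m X a x \<longrightarrow> wobj \<phi> X x (astar x) \<le> wobj \<phi> X x a)"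
  shows "(\<forall>x\<in>\<Omega>. \<forall>xi\<in>X. \<bar>astar x xi\<bar> \<le> C1 / \<phi> (C2 * cqu) * \<phi> (dist x xi / sep_dist X))
       \<and> fast_decaying_repr m \<phi> (C1 / \<phi> (C2 * cqu)) X \<Omega> astar"
proof -
  define q where "q = sep_dist X"
  have qpos: "q > 0" unfolding q_def using sep_pos assms(9,10) by blast
  have hq: "fill_dist X \<Omega> \<le> cqu * q" using assms(14) unfolding quasi_uniform_def q_def by simp
  have phipos: "\<And>t. t \<ge> 0 \<Longrightarrow> \<phi> t > 0" using assms(6) by blast
  have phimono: "\<And>s t. 0 \<le> s \<Longrightarrow> s \<le> t \<Longrightarrow> \<phi> t \<le> \<phi> s" using assms(7) by blast
  have P0: "\<phi> (C2 * cqu) > 0" using phipos assms(4,13) by simp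
  have main: "\<bar>astar x xi\<bar> \<le> C1 / \<phi> (C2 * cqu) * \<phi> (dist x xi / q)"
    if x: "x \<in> \<Omega>" and xi: "xi \<in> X" for x xi
  proof -
    obtain u where u: "reproduces m X u x" "(\<Sum>xj\<in>X. \<bar>u xj\<bar>) \<le> C1"
      "\<forall>xj\<in>X. dist x xj > C2 * fill_dist X \<Omega> \<longrightarrow> u xj = 0"
      using assms(5,9,11,15) x unfolding local_poly_repr_def by blast
    have opt: "wobj \<phi> X x (astar x) \<le> wobj \<phi> X x u" using assms(16) x u(1) by blast
    have term_le: "\<bar>u xj\<bar> / \<phi> (dist x xj / q) \<le> \<bar>u xj\<bar> / \<phi> (C2 * cqu)" if xj: "xj \<in> X" for xj
    proof (cases "u xj = 0")
      case True thus ?thesis by simp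
    next
      case False
      hence "dist x xj \<le> C2 * fill_dist X \<Omega>" using u(3) xj by force
      also have "\<dots> \<le> C2 * (cqu * q)" using hq assms(4) by simp
      finally have "dist x xj / q \<le> C2 * cqu" using qpos by (simp add: divide_simps mult.commute mult.left_commute)
      hence "\<phi> (C2 * cqu) \<le> \<phi> (dist x xj / q)" using phimono qpos by simp
      moreover have "\<phi> (dist x xj / q) > 0" using phipos qpos by simp
      ultimately show ?thesis using P0 by (simp add: frac_le)
    qed
    have "wobj \<phi> X x u \<le> (\<Sum>xj\<in>X. \<bar>u xj\<bar> / \<phi> (C2 * cqu))"
      unfolding wobj_def q_def[symmetric] using term_le by (intro sum_mono) auto
    also have "\<dots> = (\<Sum>xj\<in>X. \<bar>u xj\<bar>) / \<phi> (C2 * cqu)" by (simp add: sum_divide_distrib)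
    also have "\<dots> \<le> C1 / \<phi> (C2 * cqu)" using u(2) P0 by (simp add: divide_right_mono)
    finally have W: "wobj \<phi> X x (astar x) \<le> C1 / \<phi> (C2 * cqu)" using opt by linarith
    have pi: "\<phi> (dist x xi / q) > 0" using phipos qpos by simp
    have "\<bar>astar x xi\<bar> / \<phi> (dist x xi / q) \<le> wobj \<phi> X x (astar x)"
      unfolding wobj_def q_def[symmetric]
      by (rule member_le_sum[where f="\<lambda>xj. \<bar>astar x xj\<bar> / \<phi> (dist x xj / q)"])
         (use xi assms(9) phipos qpos in \<open>auto intro!: divide_nonneg_pos\<close>)
    hence "\<bar>astar x xi\<bar> / \<phi> (dist x xi / q) \<le> C1 / \<phi> (C2 * cqu)" using W by linarith
    thus ?thesis using pi by (simp add: pos_divide_le_eq mult.commute)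
  qed
  show ?thesis
    unfolding fast_decaying_repr_def using main assms(16) q_def by auto
qed

end
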